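(* Let $\mathcal{T}$ be a finite set and let $\mathbf{p},\mathbf{q}$ be probability measures on $\mathcal{T}$. Write $\mathbf{h}_{\mathbf{p},\mathbf{q}}(x) = \mathbf{q}(x) - \mathbf{p}(x)$. Let $\prec$ be any strict total order on $\mathcal{T}$ such that $\mathbf{h}_{\mathbf{p},\mathbf{q}}(x) > \mathbf{h}_{\mathbf{p},\mathbf{q}}(x')$ implies $x \prec x'$ and $\mathbf{h}_{\mathbf{p},\mathbf{q}}(x) < \mathbf{h}_{\mathbf{p},\mathbf{q}}(x')$ implies $x' \prec x$. Let $X_\mathbf{p} \sim \mathbf{p}$ and $Y_\mathbf{q} \sim \mathbf{q}$ be independent and define $R_{\mathbf{p},\mathbf{q}}$ to be $0$ if $Y_\mathbf{q} \prec X_\mathbf{p}$, $1$ if $X_\mathbf{p} \prec Y_\mathbf{q}$, and an independent $\mathrm{Bernoulli}(1/2)$ random variable if $X_\mathbf{p} = Y_\mathbf{q}$. Then $$\Pr[R_{\mathbf{p},\mathbf{q}} = 0] \ge \frac12 + \frac12\Big(\max_{x\in\mathcal{T}} \mathbf{h}_{\mathbf{p},\mathbf{q}}(x)\Big)^2.$$ *)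

theory Defs
  imports "HOL-Probability.Probability"
begin

definition hpq :: "'a pmf \<Rightarrow> 'a pmf \<Rightarrow> 'a \<Rightarrow> real" where
  "hpq p q x = pmf q x - pmf p x"

text \<open>Distribution of R_{p,q}: X ~ p, Y ~ q independent, and an independent fair coin
  used to break ties. The strict order is given as a relation r, (x,y) in r meaning x precedes y.\<close>
definition R_pmf :: "('a \<times> 'a) set \<Rightarrow> 'a pmf \<Rightarrow> 'a pmf \<Rightarrow> nat pmf" where
  "R_pmf r p q =
     bind_pmf p (\<lambda>X. bind_pmf q (\<lambda>Y. bind_pmf (bernoulli_pmf (1/2)) (\<lambda>B.
       return_pmf (if (Y, X) \<in> r then 0 else if (X, Y) \<in> r then 1
                   else (if B then 1 else 0)))))"

end

theory Submission
  imports Defs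
begin

lemma prob_formula:
  fixes T :: "'a set" and p q :: "'a pmf" and r
  assumes T: "finite T" and sp: "set_pmf p \<subseteq> T" and sq: "set_pmf q \<subseteq> T"
  shows "measure_pmf.prob (R_pmf r p q) {0} =
    (\<Sum>x\<in>T. (\<Sum>y\<in>T. (if (y,x)\<in>r then 1 else if (x,y)\<in>r then 0 else 1/2) * pmf q y) * pmf p x)"
proof -
  have inner: "pmf (bind_pmf (bernoulli_pmf (1/2)) (\<lambda>B.
       return_pmf (if (Y, X) \<in> r then 0 else if (X, Y) \<in> r then 1
                   else (if B then 1 else 0)))) (0::nat)
      = (if (Y,X)\<in>r then 1 else if (X,Y)\<in>r then 0 else 1/2)" for X Y
    unfolding pmf_bind
    by (subst integral_measure_pmf_real[where A=UNIV]) (auto simp: UNIV_bool)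
  show ?thesis
    unfolding measure_pmf_single R_pmf_def pmf_bind inner
    apply (subst integral_measure_pmf_real[where A=T])
    using T sp apply auto[2]
    apply (rule sum.cong, simp)
    apply (subst integral_measure_pmf_real[where A=T])
    using T sq by (auto intro!: sum.cong simp: indicator_def)
qed

lemma prefix_nonneg:
  fixes h :: "'a \<Rightarrow> real"
  assumes T: "finite T" and ST: "S \<subseteq> T" and h0: "sum h T = 0"
    and ord: "\<forall>x\<in>T. \<forall>x'\<in>T. h x < h x' \<longrightarrow> (x', x) \<in> r"
    and cl: "\<forall>x\<in>S. \<forall>z\<in>T. (z,x)\<in>r \<longrightarrow> z\<in>S"
  shows "sum h S \<ge> 0"
proof (cases "\<forall>x\<in>S. h x \<ge> 0")
  case True then show ?thesis by (simp add: sum_nonneg)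
next
  case False
  then obtain x where x: "x \<in> S" "h x < 0" by auto
  have "\<forall>z\<in>T-S. h z \<le> 0"
  proof
    fix z assume z: "z \<in> T - S"
    show "h z \<le> 0"
    proof (rule ccontr)
      assume "\<not> h z \<le> 0"
      then have "h x < h z" using x by simp
      then have "(z,x)\<in>r" using ord x ST z by auto
      then show False using cl x z by auto
    qed
  qed
  then have "sum h (T-S) \<le> 0" by (meson sum_nonpos)
  moreover have "sum h T = sum h S + sum h (T-S)"
    using T ST by (metis add.commute sum.subset_diff)
  ultimately show ?thesis using h0 by linarith
qed

lemma antisym_sum:
  fixes f :: "'a \<Rightarrow> real"
  assumes "\<And>x y. K y x = - K x y"
  shows "(\<Sum>x\<in>T. \<Sum>y\<in>T. f x * f y * K x y) = 0"
proof -
  let ?S = "(\<Sum>x\<in>T. \<Sum>y\<in>T. f x * f y * K x y)"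
  have "?S = (\<Sum>y\<in>T. \<Sum>x\<in>T. f x * f y * K x y)" by (rule sum.swap)
  also have "\<dots> = (\<Sum>y\<in>T. \<Sum>x\<in>T. - (f y * f x * K y x))"
    by (intro sum.cong refl) (metis assms mult.commute mult_minus_right)
  also have "\<dots> = - ?S" by (simp add: sum_negf)
  finally show ?thesis by linarith
qed


theorem propositionA18:
  fixes T :: "'a set" and p q :: "'a pmf" and r :: "('a \<times> 'a) set"
  assumes "finite T"
    and "set_pmf p \<subseteq> T" and "set_pmf q \<subseteq> T"
    and "strict_linear_order_on T r"
    and "\<forall>x\<in>T. \<forall>x'\<in>T. hpq p q x > hpq p q x' \<longrightarrow> (x, x') \<in> r"
    and "\<forall>x\<in>T. \<forall>x'\<in>T. hpq p q x < hpq p q x' \<longrightarrow> (x', x) \<in> r"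
  shows "measure_pmf.prob (R_pmf r p q) {0}
           \<ge> 1/2 + 1/2 * (Max (hpq p q ` T))\<^sup>2"
proof -
  note T = assms(1) and sp = assms(2) and sq = assms(3)
  define P where "P = pmf p"
  define Q where "Q = pmf q"
  define h where "h = hpq p q"
  have hQP: "h x = Q x - P x" for x unfolding h_def hpq_def P_def Q_def by simp
  define a where "a x y = (if (x,y)\<in>r then 1 else 0::real)" for x y
  define K where "K x y = a y x - a x y" for x y
  have Kanti: "K y x = - K x y" for x y unfolding K_def by simp
  have trans: "trans r" and irr: "irrefl r" and tot: "total_on T r"
    using assms(4) unfolding strict_linear_order_on_def by auto
  have nrefl: "(x,x) \<notin> r" for x using irr unfolding irrefl_def by auto
  have asym: "(x,y) \<in> r \<Longrightarrow> (y,x) \<notin> r" for x y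
    using trans nrefl unfolding trans_def by blast
  have tot': "x \<in> T \<Longrightarrow> y \<in> T \<Longrightarrow> x \<noteq> y \<Longrightarrow> (x,y) \<in> r \<or> (y,x) \<in> r" for x y
    using tot unfolding total_on_def by blast
  have g: "x \<in> T \<Longrightarrow> y \<in> T \<Longrightarrow>
      (if (y,x)\<in>r then 1 else if (x,y)\<in>r then 0 else 1/2) = (1 + K x y) / (2::real)" for x y
    unfolding K_def a_def using nrefl asym tot' by (cases "(x,y)\<in>r"; cases "(y,x)\<in>r") auto
  have sP: "sum P T = 1" unfolding P_def using sum_pmf_eq_1[OF T sp] .
  have sQ: "sum Q T = 1" unfolding Q_def using sum_pmf_eq_1[OF T sq] .
  have sh: "sum h T = 0" using sP sQ by (simp add: hQP sum_subtractf)
  define D where "D = (\<Sum>x\<in>T. \<Sum>y\<in>T. P x * Q y * K x y)"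
  have prob: "measure_pmf.prob (R_pmf r p q) {0} = 1/2 + D/2"
  proof -
    have "measure_pmf.prob (R_pmf r p q) {0} =
        (\<Sum>x\<in>T. (\<Sum>y\<in>T. (1 + K x y) / 2 * Q y) * P x)"
      unfolding prob_formula[OF T sp sq] P_def Q_def
      by (intro sum.cong refl) (simp add: g)
    also have "\<dots> = (\<Sum>x\<in>T. (\<Sum>y\<in>T. P x * Q y / 2 + P x * Q y * K x y / 2))"
      by (intro sum.cong refl) (simp add: sum_distrib_right sum_distrib_left algebra_simps add_divide_distrib)
    also have "\<dots> = (\<Sum>x\<in>T. P x * (\<Sum>y\<in>T. Q y)) / 2 + D/2"
      unfolding D_def by (simp add: sum.distrib sum_divide_distrib sum_distrib_left)
    also have "\<dots> = 1/2 + D/2" using sP sQ by (simp add: sum_distrib_right[symmetric])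
    finally show ?thesis .
  qed
  have D2: "D = (\<Sum>x\<in>T. \<Sum>y\<in>T. Q x * h y * K x y)"
  proof -
    have "D = (\<Sum>x\<in>T. \<Sum>y\<in>T. P x * P y * K x y + P x * h y * K x y)"
      unfolding D_def by (simp add: hQP algebra_simps)
    also have "\<dots> = (\<Sum>x\<in>T. \<Sum>y\<in>T. P x * h y * K x y)"
      using antisym_sum[of K P T, OF Kanti] by (simp add: sum.distrib)
    also have "\<dots> = (\<Sum>x\<in>T. \<Sum>y\<in>T. Q x * h y * K x y - h x * h y * K x y)"
      by (simp add: hQP algebra_simps)
    also have "\<dots> = (\<Sum>x\<in>T. \<Sum>y\<in>T. Q x * h y * K x y)"
      using antisym_sum[of K h T, OF Kanti] by (simp add: sum_subtractf)
    finally show ?thesis .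
  qed
  define Hm where "Hm x = (\<Sum>y\<in>T. h y * a y x)" for x
  have D3: "D = (\<Sum>x\<in>T. Q x * (2 * Hm x + h x))"
  proof -
    have Ke: "x \<in> T \<Longrightarrow> y \<in> T \<Longrightarrow> K x y = 2 * a y x - 1 + (if x = y then 1 else 0)" for x y
      unfolding K_def a_def using nrefl asym tot' by (cases "(x,y)\<in>r"; cases "(y,x)\<in>r") (auto, metis tot')
    have "D = (\<Sum>x\<in>T. \<Sum>y\<in>T. 2 * Q x * (h y * a y x) - Q x * h y + Q x * (if x = y then h y else 0))"
      unfolding D2 by (intro sum.cong refl) (simp add: Ke algebra_simps)
    also have "\<dots> = (\<Sum>x\<in>T. 2 * Q x * Hm x - Q x * sum h T + Q x * h x)"
    proof (intro sum.cong refl)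
      fix x assume x: "x \<in> T"
      have "(\<Sum>y\<in>T. 2 * Q x * (h y * a y x) - Q x * h y + Q x * (if x = y then h y else 0))
        = (\<Sum>y\<in>T. 2 * Q x * (h y * a y x)) - (\<Sum>y\<in>T. Q x * h y) + (\<Sum>y\<in>T. Q x * (if x = y then h y else 0))"
        by (simp only: sum.distrib sum_subtractf)
      also have "\<dots> = 2 * Q x * Hm x - Q x * sum h T + Q x * h x"
        unfolding Hm_def by (simp only: sum_distrib_left[symmetric]) (simp add: T x)
      finally show "(\<Sum>y\<in>T. 2 * Q x * (h y * a y x) - Q x * h y + Q x * (if x = y then h y else 0))
        = 2 * Q x * Hm x - Q x * sum h T + Q x * h x" .
    qed
    also have "\<dots> = (\<Sum>x\<in>T. Q x * (2 * Hm x + h x))"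
      using sh by (simp add: algebra_simps)
    finally show ?thesis .
  qed
  have ord: "\<forall>x\<in>T. \<forall>x'\<in>T. h x < h x' \<longrightarrow> (x', x) \<in> r"
    using assms(5) unfolding h_def by auto
  have Hm1: "Hm x \<ge> 0" if "x \<in> T" for x
  proof -
    have "Hm x = sum h {y\<in>T. (y,x)\<in>r}"
      unfolding Hm_def a_def using T by (simp add: sum.inter_filter[symmetric] if_distrib cong: if_cong)
    also have "\<dots> \<ge> 0"
      by (rule prefix_nonneg[OF T _ sh ord]) (use trans in \<open>auto dest: transD\<close>)
    finally show ?thesis .
  qed
  have Hm2: "Hm x + h x \<ge> 0" if "x \<in> T" for x
  proof -
    have "Hm x + h x = sum h {y\<in>T. (y,x)\<in>r} + sum h {x}"
      unfolding Hm_def a_def using T by (simp add: sum.inter_filter[symmetric] if_distrib cong: if_cong)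
    also have "\<dots> = sum h ({y\<in>T. (y,x)\<in>r} \<union> {x})"
      using T nrefl by (subst sum.union_disjoint) auto
    also have "\<dots> \<ge> 0"
      by (rule prefix_nonneg[OF T _ sh ord]) (use trans that in \<open>auto dest: transD\<close>)
    finally show ?thesis .
  qed
  have Tne: "T \<noteq> {}" using sp set_pmf_not_empty[of p] by auto
  obtain x0 where x0: "x0 \<in> T" "h x0 = Max (h ` T)"
  proof -
    have "Max (h ` T) \<in> h ` T" using T Tne by (intro Max_in) auto
    then show ?thesis using that by force
  qed
  have hx0: "h x0 \<ge> 0"
  proof (rule ccontr)
    assume "\<not> h x0 \<ge> 0"
    then have "\<forall>x\<in>T. h x < 0" using x0 T by (metis Max_ge finite_imageI imageI le_less_trans not_le)
    then have "sum h T < 0" using sum_strict_mono[OF T Tne, of h "\<lambda>_. 0"] by simp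
    then show False using sh by simp
  qed
  have nn: "\<forall>x\<in>T. 0 \<le> Q x * (2 * Hm x + h x)"
    using Hm1 Hm2 unfolding Q_def by (smt (verit) pmf_nonneg mult_nonneg_nonneg)
  have "Q x0 * (2 * Hm x0 + h x0) \<le> D"
    unfolding D3 using member_le_sum[of x0 T "\<lambda>x. Q x * (2 * Hm x + h x)"] nn x0 T by auto
  moreover have "h x0 * h x0 \<le> Q x0 * (2 * Hm x0 + h x0)"
  proof -
    have "h x0 \<le> Q x0" using hQP[of x0] unfolding P_def by (simp add: pmf_nonneg)
    moreover have "h x0 \<le> 2 * Hm x0 + h x0" using Hm1[OF x0(1)] by simp
    ultimately show ?thesis using hx0 by (simp add: mult_mono)
  qed
  ultimately have "(Max (h ` T))\<^sup>2 \<le> D" using x0 by (simp add: power2_eq_square)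
  then show ?thesis using prob unfolding h_def by simp
qed

end
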